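(* A labeled finite-state automaton $\mathcal{S}=(Q,E,\delta,Q_0,\Sigma,\ell)$ is initial-state opaque with respect to $Q_S\subset Q$ if and only if $Q_0\ne\emptyset \implies Q_0\not\subset Q_S$ and, for every $q_0\in Q_0\cap Q_S$, in the concurrent composition $\mathrm{CC}(\mathcal{S}_{\varepsilon},\mathcal{S}_{\mathrm{obs}}^{\varepsilon})$ all states reachable from $(q_0,\mathrm{UR}(Q_0\setminus Q_S))$ are of the form $(-,x)$ with $x\ne\emptyset$.
   Context: A labeled finite-state automaton (LFSA) $\mathcal{S}=(Q,E,\delta,Q_0,\Sigma,\ell)$ has finite state set $Q$, finite event alphabet $E$, transition relation $\delta\subset Q\times E\times Q$ (extended to event sequences), initial states $Q_0\subset Q$, output alphabet $\Sigma$, and labeling $\ell:E\to\Sigma\cup\{\epsilon\}$ (extended to sequences). Observable events $E_o=\{e:\ell(e)\in\Sigma\}$, unobservable events $E_{uo}=\{e:\ell(e)=\epsilon\}$. For $x\subset Q$, the unobservable reach is $\mathrm{UR}(x)=\bigcup_{q\in x}\bigcup_{s\in E_{uo}^*}\delta(q,s)$. $\mathcal{S}$ is initial-state opaque (ISO) with respect to secret states $Q_S\subset Q$ if for every run $q_0\xrightarrow{s}q$ with $q_0\in Q_0\cap Q_S$ there is a run $q_0'\xrightarrow{s'}q'$ with $q_0'\in Q_0\setminus Q_S$ and $\ell(s)=\ell(s')$. The observer $\mathcal{S}_{\mathrm{obs}}$ is the deterministic automaton with state set $2^Q$, alphabet $\ell(E_o)$, initial state $\mathrm{UR}(Q_0)$,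 and transitions $\delta_{\mathrm{obs}}(x,a)=\bigcup_{q\in x}\bigcup_{e_a\in E_o,\ell(e_a)=a,\ s\in E_{uo}^*}\delta(q,e_as)$ (so $\delta_{\mathrm{obs}}(\emptyset,a)=\emptyset$). $\mathcal{S}_{\varepsilon}$ is obtained from $\mathcal{S}$ by relabeling each transition $q\xrightarrow{e}q'$ as $q\xrightarrow{\ell(e)}q'$ if $e\in E_o$ and as $q\xrightarrow{\varepsilon}q'$ if $e\in E_{uo}$, with labeling $\ell'$ on $\ell(E_o)\cup\{\varepsilon\}$ being the identity on $\ell(E_o)$ and $\ell'(\varepsilon)=\epsilon$. $\mathcal{S}_{\mathrm{obs}}^{\varepsilon}$ is $\mathcal{S}_{\mathrm{obs}}$ with the additional (unused) event $\varepsilon$ and labeling $\ell'$. The concurrent composition $\mathrm{CC}(\mathcal{S}^1,\mathcal{S}^2)$ of two LFSAs $\mathcal{S}^i=(Q_i,E,\delta_i,Q_{0i},\Sigma,\ell)$ has states $Q_1\times Q_2$, initial states $Q_{01}\times Q_{02}$, and transitions: $((q_1,q_1'),(e,e'),(q_2,q_2'))$ for observable $e,e'$ with $\ell(e)=\ell(e')$, $(q_1,e,q_2)\in\delta_1$, $(q_1',e',q_2')\in\delta_2$; $((q_1,q_1'),(e,\epsilon),(q_2,q_1'))$ for unobservable $e$ with $(q_1,e,q_2)\in\delta_1$; and $((q_1,q_1'),(\epsilon,e),(q_1,q_2'))$ for unobservable $e$ with $(q_1',e,q_2')\in\delta_2$. Observable transitions with the same label are synchronized, unobservable ones interleave. 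*)

theory Defs
  imports Main
begin

text \<open>Labeled finite-state automata. The labeling returns None for the
empty output (unobservable events), Some a for an observable label a.\<close>

record ('q, 'e, 'o) lfsa =
  states :: "'q set"
  events :: "'e set"
  trans  :: "('q \<times> 'e \<times> 'q) set"
  init   :: "'q set"
  outs   :: "'o set"
  lab    :: "'e \<Rightarrow> 'o option"

definition lfsa_wf :: "('q, 'e, 'o) lfsa \<Rightarrow> bool" where
  "lfsa_wf S \<longleftrightarrow> finite (states S) \<and> finite (events S) \<and> finite (outs S)
     \<and> trans S \<subseteq> states S \<times> events S \<times> states S
     \<and> init S \<subseteq> states S
     \<and> (\<forall>e \<in> events S. lab S e = None \<or> the (lab S e) \<in> outs S)"

definition obs_events :: "('q, 'e, 'o) lfsa \<Rightarrow> 'e set" where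
  "obs_events S = {e \<in> events S. lab S e \<noteq> None}"

definition unobs_events :: "('q, 'e, 'o) lfsa \<Rightarrow> 'e set" where
  "unobs_events S = {e \<in> events S. lab S e = None}"

inductive run :: "('q \<times> 'e \<times> 'q) set \<Rightarrow> 'q \<Rightarrow> 'e list \<Rightarrow> 'q \<Rightarrow> bool"
  for \<delta> where
  run_Nil: "run \<delta> q [] q"
| run_Cons: "(q, e, q1) \<in> \<delta> \<Longrightarrow> run \<delta> q1 s q2 \<Longrightarrow> run \<delta> q (e # s) q2"

definition lab_seq :: "('q, 'e, 'o) lfsa \<Rightarrow> 'e list \<Rightarrow> 'o list" where
  "lab_seq S s = List.map_filter (lab S) s"

definition ISO :: "('q, 'e, 'o) lfsa \<Rightarrow> 'q set \<Rightarrow> bool" where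
  "ISO S QS \<longleftrightarrow>
     (\<forall>q0 s q. q0 \<in> init S \<inter> QS \<and> run (trans S) q0 s q \<longrightarrow>
        (\<exists>q0' s' q'. q0' \<in> init S - QS \<and> run (trans S) q0' s' q' \<and> lab_seq S s = lab_seq S s'))"

definition UR :: "('q, 'e, 'o) lfsa \<Rightarrow> 'q set \<Rightarrow> 'q set" where
  "UR S x = {q'. \<exists>q \<in> x. \<exists>s. set s \<subseteq> unobs_events S \<and> run (trans S) q s q'}"

definition delta_obs :: "('q, 'e, 'o) lfsa \<Rightarrow> 'q set \<Rightarrow> 'o \<Rightarrow> 'q set" where
  "delta_obs S x a = {q'. \<exists>q \<in> x. \<exists>e s. e \<in> obs_events S \<and> lab S e = Some a
      \<and> set s \<subseteq> unobs_events S \<and> run (trans S) q (e # s) q'}"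

text \<open>S_eps: events are the observed outputs (Some a) plus the fresh event epsilon (None);
  the labeling is the identity (epsilon maps to the empty output).\<close>
definition S_eps :: "('q, 'e, 'o) lfsa \<Rightarrow> ('q, 'o option, 'o) lfsa" where
  "S_eps S = \<lparr> states = states S,
               events = lab S ` obs_events S \<union> {None},
               trans = {(q, lab S e, q') | q e q'. (q, e, q') \<in> trans S},
               init = init S,
               outs = outs S,
               lab = id \<rparr>"

text \<open>The observer with the additional unused event epsilon (None).\<close>
definition S_obs_eps :: "('q, 'e, 'o) lfsa \<Rightarrow> ('q set, 'o option, 'o) lfsa" where
  "S_obs_eps S = \<lparr> states = Pow (states S),
                   events = lab S ` obs_events S \<union> {None},
                   trans = {(x, Some a, delta_obs S x a) | x a.
                              x \<subseteq> states S \<and> Some a \<in> lab S ` obs_events S},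
                   init = {UR S (init S)},
                   outs = outs S,
                   lab = id \<rparr>"

text \<open>Concurrent composition of two LFSAs over the same event set and labeling
  (the event set and labeling of the first one are used). Events of the composition
  are pairs of (event or epsilon), epsilon being None.\<close>
definition CC :: "('a, 'e, 'o) lfsa \<Rightarrow> ('b, 'e, 'o) lfsa \<Rightarrow> ('a \<times> 'b, 'e option \<times> 'e option, 'o) lfsa" where
  "CC S1 S2 = \<lparr> states = states S1 \<times> states S2,
                events = {(Some e, Some e') | e e'. e \<in> obs_events S1 \<and> e' \<in> obs_events S1 \<and> lab S1 e = lab S1 e'}
                         \<union> {(Some e, None) | e. e \<in> unobs_events S1}
                         \<union> {(None, Some e) | e. e \<in> unobs_events S1},
                trans = {((q1, p1), (Some e, Some e'), (q2, p2)) | q1 p1 e e' q2 p2.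
                           e \<in> obs_events S1 \<and> e' \<in> obs_events S1 \<and> lab S1 e = lab S1 e'
                           \<and> (q1, e, q2) \<in> trans S1 \<and> (p1, e', p2) \<in> trans S2}
                      \<union> {((q1, p), (Some e, None), (q2, p)) | q1 p e q2.
                           e \<in> unobs_events S1 \<and> (q1, e, q2) \<in> trans S1}
                      \<union> {((q, p1), (None, Some e), (q, p2)) | q p1 e p2.
                           e \<in> unobs_events S1 \<and> (p1, e, p2) \<in> trans S2},
                init = init S1 \<times> init S2,
                outs = outs S1,
                lab = (\<lambda>(a, b). case a of Some e \<Rightarrow> lab S1 e
                                         | None \<Rightarrow> (case b of Some e \<Rightarrow> lab S1 e | None \<Rightarrow> None)) \<rparr>"

definition step_rel :: "('q, 'e, 'o) lfsa \<Rightarrow> ('q \<times> 'q) set" where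
  "step_rel S = {(q, q'). \<exists>e. (q, e, q') \<in> trans S}"

definition reachable_from :: "('q, 'e, 'o) lfsa \<Rightarrow> 'q \<Rightarrow> 'q set" where
  "reachable_from S q = {q'. (q, q') \<in> (step_rel S)\<^sup>*}"

end

theory Submission
  imports Defs
begin

abbreviation obs_iter :: "('q, 'e, 'o) lfsa \<Rightarrow> 'q set \<Rightarrow> 'o list \<Rightarrow> 'q set" where
  "obs_iter S Y w \<equiv> foldl (delta_obs S) Y w"

lemma step_CC_elim:
  assumes "((q,p),(q',x)) \<in> step_rel (CC (S_eps S) (S_obs_eps S))"
  shows "(x = p \<and> (\<exists>e. (q,e,q') \<in> trans S \<and> lab S e = None)) \<or>
         (\<exists>e a. (q,e,q') \<in> trans S \<and> lab S e = Some a \<and> x = delta_obs S p a \<and> p \<subseteq> states S)"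
proof -
  obtain ev where ev: "((q,p),ev,(q',x)) \<in> trans (CC (S_eps S) (S_obs_eps S))"
    using assms unfolding step_rel_def by blast
  have T: "trans (CC (S_eps S) (S_obs_eps S)) =
     {((q1, p1), (Some e, Some e'), (q2, p2)) | q1 p1 e e' q2 p2.
          e \<in> obs_events (S_eps S) \<and> e' \<in> obs_events (S_eps S) \<and> lab (S_eps S) e = lab (S_eps S) e'
          \<and> (q1, e, q2) \<in> trans (S_eps S) \<and> (p1, e', p2) \<in> trans (S_obs_eps S)}
     \<union> {((q1, p), (Some e, None), (q2, p)) | q1 p e q2.
          e \<in> unobs_events (S_eps S) \<and> (q1, e, q2) \<in> trans (S_eps S)}
     \<union> {((q, p1), (None, Some e), (q, p2)) | q p1 e p2.
          e \<in> unobs_events (S_eps S) \<and> (p1, e, p2) \<in> trans (S_obs_eps S)}"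
    unfolding CC_def by simp
  have LE: "lab (S_eps S) = id" unfolding S_eps_def by simp
  have TE: "trans (S_eps S) = {(q, lab S e, q') | q e q'. (q, e, q') \<in> trans S}"
    unfolding S_eps_def by simp
  have TO: "trans (S_obs_eps S) = {(x, Some a, delta_obs S x a) | x a.
                              x \<subseteq> states S \<and> Some a \<in> lab S ` obs_events S}"
    unfolding S_obs_eps_def by simp
  have UE: "unobs_events (S_eps S) \<subseteq> {None}"
    unfolding unobs_events_def LE by auto
  from ev consider
    (a) e e' where "ev = (Some e, Some e')" "e = e'" "(q, e, q') \<in> trans (S_eps S)" "(p, e', x) \<in> trans (S_obs_eps S)"
  | (b) e where "ev = (Some e, None)" "x = p" "e \<in> unobs_events (S_eps S)" "(q, e, q') \<in> trans (S_eps S)"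
  | (c) e where "e \<in> unobs_events (S_eps S)" "(p, e, x) \<in> trans (S_obs_eps S)"
    unfolding T LE by auto
  then show ?thesis
  proof cases
    case a
    then show ?thesis unfolding TE TO by auto
  next
    case b
    then show ?thesis using UE unfolding TE by auto
  next
    case c
    then show ?thesis using UE unfolding TO by auto
  qed
qed

lemma step_CC_unobs:
  assumes "(q,e,q') \<in> trans S" "lab S e = None"
  shows "((q,p),(q',p)) \<in> step_rel (CC (S_eps S) (S_obs_eps S))"
  using assms
  unfolding step_rel_def CC_def S_eps_def S_obs_eps_def obs_events_def unobs_events_def
  by force

lemma step_CC_obs:
  assumes "lfsa_wf S" "(q,e,q') \<in> trans S" "lab S e = Some a" "p \<subseteq> states S"
  shows "((q,p),(q',delta_obs S p a)) \<in> step_rel (CC (S_eps S) (S_obs_eps S))"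
proof -
  have e: "e \<in> obs_events S" using assms unfolding lfsa_wf_def obs_events_def by auto
  have t1: "(q, Some a, q') \<in> trans (S_eps S)"
    unfolding S_eps_def using assms(2,3) by force
  have t2: "(p, Some a, delta_obs S p a) \<in> trans (S_obs_eps S)"
    unfolding S_obs_eps_def using assms(3,4) e by force
  have "Some a \<in> lab S ` obs_events S" using e assms(3) by (metis image_eqI)
  then have o: "Some a \<in> obs_events (S_eps S)"
    unfolding obs_events_def S_eps_def lfsa.simps
    by (intro CollectI conjI UnI1) (simp_all add: obs_events_def)
  have "((q,p),(Some (Some a), Some (Some a)),(q',delta_obs S p a)) \<in> trans (CC (S_eps S) (S_obs_eps S))"
    unfolding CC_def lfsa.simps
    apply (rule UnI1, rule UnI1)
    using t1 t2 o by blast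
  then show ?thesis unfolding step_rel_def by blast
qed

lemma run_append: "run d q s q1 \<Longrightarrow> run d q1 t q2 \<Longrightarrow> run d q (s @ t) q2"
proof (induction rule: run.induct)
  case (run_Nil q)
  then show ?case by simp
next
  case (run_Cons q e q1 s q2')
  then show ?case using run.run_Cons[of q e q1 d] by simp
qed

lemma run_snoc: "run d q s q1 \<Longrightarrow> (q1,e,q2) \<in> d \<Longrightarrow> run d q (s @ [e]) q2"
  by (metis run_append run.run_Cons run.run_Nil)

lemma run_in: "run d q s q' \<Longrightarrow> d \<subseteq> A \<times> B \<times> A \<Longrightarrow> q \<in> A \<Longrightarrow> q' \<in> A"
proof (induction rule: run.induct)
  case (run_Cons q e q1 s q2)
  have "(q, e, q1) \<in> A \<times> B \<times> A" using run_Cons.hyps(1) run_Cons.prems(1) by (rule rev_subsetD)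
  then have "q1 \<in> A" by simp
  then show ?case using run_Cons.IH run_Cons.prems(1) by simp
qed simp

lemma run_Cons_in: assumes "run d q (e # s) q'" "d \<subseteq> A \<times> B \<times> A" shows "q' \<in> A"
proof -
  from assms(1) obtain q1 where "(q, e, q1) \<in> d" "run d q1 s q'" by (cases rule: run.cases) auto
  moreover have "(q, e, q1) \<in> A \<times> B \<times> A" using calculation(1) assms(2) by auto
  ultimately show ?thesis using run_in[of d q1 s q' A B] assms(2) by simp
qed

lemma lab_seq_Cons: "lab_seq S (e # s) = (case lab S e of None \<Rightarrow> lab_seq S s | Some a \<Rightarrow> a # lab_seq S s)"
  unfolding lab_seq_def by (simp add: map_filter_simps)

lemma lab_seq_Nil: "lab_seq S [] = []"
  by (simp add: lab_seq_def map_filter_simps)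

lemma lab_seq_append: "lab_seq S (s @ t) = lab_seq S s @ lab_seq S t"
  by (induction s) (auto simp: lab_seq_Cons lab_seq_Nil split: option.splits)

lemma lab_seq_unobs: "set u \<subseteq> unobs_events S \<Longrightarrow> lab_seq S u = []"
  by (induction u) (auto simp: lab_seq_Cons lab_seq_Nil unobs_events_def)

lemma delta_obs_sub:
  assumes "lfsa_wf S" shows "delta_obs S p a \<subseteq> states S"
proof
  fix x assume "x \<in> delta_obs S p a"
  then obtain q e u where r: "run (trans S) q (e # u) x" unfolding delta_obs_def by blast
  have "trans S \<subseteq> states S \<times> events S \<times> states S" using assms unfolding lfsa_wf_def by blast
  then show "x \<in> states S" using run_Cons_in[OF r] by blast
qed

lemma L1:
  assumes "lfsa_wf S"
  shows "run (trans S) q s q' \<Longrightarrow> p \<subseteq> states S \<Longrightarrow>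
    ((q,p),(q', obs_iter S p (lab_seq S s))) \<in> (step_rel (CC (S_eps S) (S_obs_eps S)))\<^sup>*"
proof (induction arbitrary: p rule: run.induct)
  case (run_Nil q)
  then show ?case by (simp add: lab_seq_Nil)
next
  case (run_Cons q e q1 s q2)
  show ?case
  proof (cases "lab S e")
    case None
    have st: "((q,p),(q1,p)) \<in> step_rel (CC (S_eps S) (S_obs_eps S))"
      by (rule step_CC_unobs[OF run_Cons.hyps(1) None])
    have "((q1,p),(q2, obs_iter S p (lab_seq S s))) \<in> (step_rel (CC (S_eps S) (S_obs_eps S)))\<^sup>*"
      using run_Cons.IH run_Cons.prems by blast
    with st have "((q,p),(q2, obs_iter S p (lab_seq S s))) \<in> (step_rel (CC (S_eps S) (S_obs_eps S)))\<^sup>*"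
      by (rule converse_rtrancl_into_rtrancl)
    then show ?thesis by (simp add: lab_seq_Cons None)
  next
    case (Some a)
    have sub: "delta_obs S p a \<subseteq> states S" by (rule delta_obs_sub[OF assms])
    have st: "((q,p),(q1,delta_obs S p a)) \<in> step_rel (CC (S_eps S) (S_obs_eps S))"
      by (rule step_CC_obs[OF assms run_Cons.hyps(1) Some run_Cons.prems])
    have "((q1,delta_obs S p a),(q2, obs_iter S (delta_obs S p a) (lab_seq S s))) \<in> (step_rel (CC (S_eps S) (S_obs_eps S)))\<^sup>*"
      by (rule run_Cons.IH[OF sub])
    with st have "((q,p),(q2, obs_iter S (delta_obs S p a) (lab_seq S s))) \<in> (step_rel (CC (S_eps S) (S_obs_eps S)))\<^sup>*"
      by (rule converse_rtrancl_into_rtrancl)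
    then show ?thesis by (simp add: lab_seq_Cons Some)
  qed
qed

lemma L2:
  assumes "((q,p),(q',x)) \<in> (step_rel (CC (S_eps S) (S_obs_eps S)))\<^sup>*"
  shows "\<exists>s. run (trans S) q s q' \<and> x = obs_iter S p (lab_seq S s)"
  using assms
proof (induction rule: rtrancl_induct2)
  case refl
  then show ?case by (auto intro: run.intros simp: lab_seq_Nil)
next
  case (step q1 x1 q2 x2)
  then obtain s where s: "run (trans S) q s q1" "x1 = obs_iter S p (lab_seq S s)" by blast
  from step_CC_elim[OF step(2)] show ?case
  proof
    assume "x2 = x1 \<and> (\<exists>e. (q1, e, q2) \<in> trans S \<and> lab S e = None)"
    then obtain e where "x2 = x1" "(q1, e, q2) \<in> trans S" "lab S e = None" by blast
    then show ?thesis using s run_snoc[OF s(1)]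
      by (intro exI[of _ "s @ [e]"]) (auto simp: lab_seq_append lab_seq_Cons lab_seq_Nil)
  next
    assume "\<exists>e a. (q1, e, q2) \<in> trans S \<and> lab S e = Some a \<and> x2 = delta_obs S x1 a \<and> x1 \<subseteq> states S"
    then obtain e a where "(q1, e, q2) \<in> trans S" "lab S e = Some a" "x2 = delta_obs S x1 a" by blast
    then show ?thesis using s run_snoc[OF s(1)]
      by (intro exI[of _ "s @ [e]"]) (auto simp: lab_seq_append lab_seq_Cons lab_seq_Nil)
  qed
qed

definition closed :: "('q, 'e, 'o) lfsa \<Rightarrow> 'q set \<Rightarrow> bool" where
  "closed S Y \<longleftrightarrow> (\<forall>q\<in>Y. \<forall>e q1. (q,e,q1) \<in> trans S \<and> lab S e = None \<longrightarrow> q1 \<in> Y)"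

lemma closed_UR:
  assumes "lfsa_wf S" shows "closed S (UR S X)"
  unfolding closed_def UR_def
proof (safe)
  fix q e q1 q0 s
  assume h: "q0 \<in> X" "set s \<subseteq> unobs_events S" "run (trans S) q0 s q" "(q, e, q1) \<in> trans S" "lab S e = None"
  have eu: "e \<in> unobs_events S" using assms h(4,5)
    unfolding lfsa_wf_def unobs_events_def by auto
  have "set (s @ [e]) \<subseteq> unobs_events S" using h(2) eu by simp
  moreover have "run (trans S) q0 (s @ [e]) q1" using h(3,4) by (rule run_snoc)
  ultimately show "\<exists>q\<in>X. \<exists>s. set s \<subseteq> unobs_events S \<and> run (trans S) q s q1"
    using h(1) by blast
qed

lemma closed_delta:
  assumes "lfsa_wf S" shows "closed S (delta_obs S Y a)"
  unfolding closed_def delta_obs_def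
proof (safe)
  fix q e q1 q0 e0 s
  assume h: "q0 \<in> Y" "e0 \<in> obs_events S" "lab S e0 = Some a" "set s \<subseteq> unobs_events S"
    "run (trans S) q0 (e0 # s) q" "(q, e, q1) \<in> trans S" "lab S e = None"
  have eu: "e \<in> unobs_events S" using assms h(6,7)
    unfolding lfsa_wf_def unobs_events_def by auto
  have "set (s @ [e]) \<subseteq> unobs_events S" using h(4) eu by simp
  moreover have "run (trans S) q0 (e0 # (s @ [e])) q1" using run_snoc[OF h(5,6)] by simp
  ultimately show "\<exists>q\<in>Y. \<exists>e sa. e \<in> obs_events S \<and> lab S e = Some a \<and> set sa \<subseteq> unobs_events S \<and> run (trans S) q (e # sa) q1"
    using h(1,2,3) by blast
qed

lemma LA:
  assumes "lfsa_wf S"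
  shows "run (trans S) q s q' \<Longrightarrow> q \<in> Y \<Longrightarrow> closed S Y \<Longrightarrow> q' \<in> obs_iter S Y (lab_seq S s)"
proof (induction arbitrary: Y rule: run.induct)
  case (run_Nil q)
  then show ?case by (simp add: lab_seq_Nil)
next
  case (run_Cons q e q1 s q2)
  show ?case
  proof (cases "lab S e")
    case None
    then have "q1 \<in> Y" using run_Cons unfolding closed_def by blast
    then show ?thesis using run_Cons None by (simp add: lab_seq_Cons)
  next
    case (Some a)
    have e: "e \<in> obs_events S" using assms run_Cons(1) Some unfolding lfsa_wf_def obs_events_def by auto
    have r1: "run (trans S) q [e] q1" by (rule run.run_Cons[OF run_Cons(1) run.run_Nil])
    have "set [] \<subseteq> unobs_events S" by simp
    then have "q1 \<in> delta_obs S Y a" unfolding delta_obs_def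
      using r1 run_Cons(4) e Some by blast
    then show ?thesis using run_Cons(3)[OF _ closed_delta[OF assms]] Some by (simp add: lab_seq_Cons)
  qed
qed

lemma LB: "q' \<in> obs_iter S Y w \<Longrightarrow> \<exists>q\<in>Y. \<exists>s. run (trans S) q s q' \<and> lab_seq S s = w"
proof (induction w arbitrary: Y)
  case Nil
  then have "q' \<in> Y" by simp
  moreover have "run (trans S) q' [] q'" by (rule run.run_Nil)
  moreover have "lab_seq S [] = []" by (rule lab_seq_Nil)
  ultimately show ?case by blast
next
  case (Cons a w)
  have "q' \<in> obs_iter S (delta_obs S Y a) w" using Cons.prems by simp
  from Cons.IH[OF this] obtain q1 s where q1: "q1 \<in> delta_obs S Y a" "run (trans S) q1 s q'" "lab_seq S s = w"
    by blast
  from q1(1) obtain q e u where h: "q \<in> Y" "lab S e = Some a" "set u \<subseteq> unobs_events S" "run (trans S) q (e # u) q1"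
    unfolding delta_obs_def by blast
  have r: "run (trans S) q ((e # u) @ s) q'" using h(4) q1(2) by (rule run_append)
  have "lab_seq S ((e # u) @ s) = a # w"
    using h(2) lab_seq_unobs[OF h(3)] q1(3) by (simp add: lab_seq_Cons lab_seq_append)
  with r h(1) show ?case by blast
qed

lemma LB_UR: "q' \<in> obs_iter S (UR S X) w \<Longrightarrow> \<exists>q\<in>X. \<exists>s. run (trans S) q s q' \<and> lab_seq S s = w"
proof -
  assume "q' \<in> obs_iter S (UR S X) w"
  from LB[OF this] obtain q s where h1: "q \<in> UR S X" "run (trans S) q s q'" "lab_seq S s = w" by blast
  from h1(1) obtain q0 u where h2: "q0 \<in> X" "set u \<subseteq> unobs_events S" "run (trans S) q0 u q"
    unfolding UR_def by blast
  have r: "run (trans S) q0 (u @ s) q'" using h2(3) h1(2) by (rule run_append)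
  have "lab_seq S (u @ s) = w" using lab_seq_unobs[OF h2(2)] h1(3) by (simp add: lab_seq_append)
  with r h2(1) show ?thesis by blast
qed

lemma UR_sub: assumes "lfsa_wf S" "X \<subseteq> states S" shows "UR S X \<subseteq> states S"
proof
  fix x assume "x \<in> UR S X"
  then obtain q s where h: "q \<in> X" "run (trans S) q s x" unfolding UR_def by blast
  have "trans S \<subseteq> states S \<times> events S \<times> states S" using assms(1) unfolding lfsa_wf_def by blast
  moreover have "q \<in> states S" using h(1) assms(2) by blast
  ultimately show "x \<in> states S" by (rule run_in[OF h(2)])
qed

lemma UR_self: "X \<subseteq> UR S X"
proof
  fix x assume "x \<in> X"
  moreover have "run (trans S) x [] x" by (rule run.run_Nil)
  moreover have "set [] \<subseteq> unobs_events S" by simp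
  ultimately show "x \<in> UR S X" unfolding UR_def by blast
qed

lemma T1:
  assumes iso': "\<And>q0 s q. q0 \<in> init S \<inter> QS \<Longrightarrow> run (trans S) q0 s q \<Longrightarrow>
        \<exists>q0' s' q'. q0' \<in> init S - QS \<and> run (trans S) q0' s' q' \<and> lab_seq S s = lab_seq S s'"
  shows "init S \<noteq> {} \<longrightarrow> \<not> init S \<subseteq> QS"
proof (intro impI)
    assume "init S \<noteq> {}"
    then obtain q0 where q0: "q0 \<in> init S" by blast
    show "\<not> init S \<subseteq> QS"
    proof
      assume "init S \<subseteq> QS"
      with q0 have "q0 \<in> init S \<inter> QS" by blast
      from iso'[OF this run.run_Nil] obtain q0' where "q0' \<in> init S - QS" by blast
      with \<open>init S \<subseteq> QS\<close> show False by blast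
    qed
qed

lemma T2:
  assumes wf: "lfsa_wf S"
  assumes iso': "\<And>q0 s q. q0 \<in> init S \<inter> QS \<Longrightarrow> run (trans S) q0 s q \<Longrightarrow>
        \<exists>q0' s' q'. q0' \<in> init S - QS \<and> run (trans S) q0' s' q' \<and> lab_seq S s = lab_seq S s'"
  shows "\<forall>q0 \<in> init S \<inter> QS.
               \<forall>q x. (q, x) \<in> reachable_from (CC (S_eps S) (S_obs_eps S)) (q0, UR S (init S - QS))
                      \<longrightarrow> x \<noteq> {}"
proof (intro ballI allI impI)
    fix q0 q x
    assume q0: "q0 \<in> init S \<inter> QS"
      and r: "(q, x) \<in> reachable_from (CC (S_eps S) (S_obs_eps S)) (q0, UR S (init S - QS))"
    from r have "((q0, UR S (init S - QS)), (q, x)) \<in> (step_rel (CC (S_eps S) (S_obs_eps S)))\<^sup>*"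
      unfolding reachable_from_def by simp
    from L2[OF this] obtain s where s: "run (trans S) q0 s q" "x = obs_iter S (UR S (init S - QS)) (lab_seq S s)"
      by blast
    from iso'[OF q0 s(1)] obtain q0' s' q' where h: "q0' \<in> init S - QS" "run (trans S) q0' s' q'" "lab_seq S s = lab_seq S s'"
      by blast
    have "q0' \<in> UR S (init S - QS)" by (rule subsetD[OF UR_self h(1)])
    from LA[OF wf h(2) this closed_UR[OF wf]]
    have "q' \<in> obs_iter S (UR S (init S - QS)) (lab_seq S s')" .
    then have "q' \<in> x" using s(2) h(3) by simp
    then show "x \<noteq> {}" by auto
qed

lemma ISO_D:
  assumes "ISO S QS" "q0 \<in> init S \<inter> QS" "run (trans S) q0 s q"
  shows "\<exists>q0' s' q'. q0' \<in> init S - QS \<and> run (trans S) q0' s' q' \<and> lab_seq S s = lab_seq S s'"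
proof -
  have "\<forall>q0 s q. q0 \<in> init S \<inter> QS \<and> run (trans S) q0 s q \<longrightarrow>
        (\<exists>q0' s' q'. q0' \<in> init S - QS \<and> run (trans S) q0' s' q' \<and> lab_seq S s = lab_seq S s')"
    using assms(1) unfolding ISO_def .
  then show ?thesis using assms(2,3) by blast
qed

theorem theorem5:
  fixes S :: "('q, 'e, 'o) lfsa" and QS :: "'q set"
  assumes "lfsa_wf S" and "QS \<subseteq> states S"
  shows "ISO S QS \<longleftrightarrow>
           ((init S \<noteq> {} \<longrightarrow> \<not> init S \<subseteq> QS) \<and>
            (\<forall>q0 \<in> init S \<inter> QS.
               \<forall>q x. (q, x) \<in> reachable_from (CC (S_eps S) (S_obs_eps S)) (q0, UR S (init S - QS))
                      \<longrightarrow> x \<noteq> {}))"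
proof
  assume iso: "ISO S QS"
  show "((init S \<noteq> {} \<longrightarrow> \<not> init S \<subseteq> QS) \<and>
            (\<forall>q0 \<in> init S \<inter> QS.
               \<forall>q x. (q, x) \<in> reachable_from (CC (S_eps S) (S_obs_eps S)) (q0, UR S (init S - QS))
                      \<longrightarrow> x \<noteq> {}))"
  proof (rule conjI)
    show "init S \<noteq> {} \<longrightarrow> \<not> init S \<subseteq> QS" by (rule T1[OF ISO_D[OF iso]])
    show "\<forall>q0 \<in> init S \<inter> QS.
               \<forall>q x. (q, x) \<in> reachable_from (CC (S_eps S) (S_obs_eps S)) (q0, UR S (init S - QS))
                      \<longrightarrow> x \<noteq> {}" by (rule T2[OF assms(1) ISO_D[OF iso]])
  qed
next
  assume c: "((init S \<noteq> {} \<longrightarrow> \<not> init S \<subseteq> QS) \<and>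
            (\<forall>q0 \<in> init S \<inter> QS.
               \<forall>q x. (q, x) \<in> reachable_from (CC (S_eps S) (S_obs_eps S)) (q0, UR S (init S - QS))
                      \<longrightarrow> x \<noteq> {}))"
  show "ISO S QS" unfolding ISO_def
  proof (intro allI impI)
    fix q0 s q
    assume h: "q0 \<in> init S \<inter> QS \<and> run (trans S) q0 s q"
    have "init S - QS \<subseteq> states S" using assms(1) unfolding lfsa_wf_def by blast
    then have sub: "UR S (init S - QS) \<subseteq> states S" by (rule UR_sub[OF assms(1)])
    have "((q0, UR S (init S - QS)), (q, obs_iter S (UR S (init S - QS)) (lab_seq S s)))
            \<in> (step_rel (CC (S_eps S) (S_obs_eps S)))\<^sup>*"
      by (rule L1[OF assms(1) conjunct2[OF h] sub])
    then have "(q, obs_iter S (UR S (init S - QS)) (lab_seq S s)) \<in> reachable_from (CC (S_eps S) (S_obs_eps S)) (q0, UR S (init S - QS))"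
      unfolding reachable_from_def by simp
    moreover have c2: "\<forall>q0 \<in> init S \<inter> QS.
               \<forall>q x. (q, x) \<in> reachable_from (CC (S_eps S) (S_obs_eps S)) (q0, UR S (init S - QS))
                      \<longrightarrow> x \<noteq> {}" using c by (rule conjunct2)
    ultimately have "obs_iter S (UR S (init S - QS)) (lab_seq S s) \<noteq> {}"
      using c2 conjunct1[OF h] by simp
    then obtain q' where "q' \<in> obs_iter S (UR S (init S - QS)) (lab_seq S s)" by blast
    from LB_UR[OF this] obtain q0' s' where "q0' \<in> init S - QS" "run (trans S) q0' s' q'" "lab_seq S s' = lab_seq S s"
      by blast
    then show "\<exists>q0' s' q'. q0' \<in> init S - QS \<and> run (trans S) q0' s' q' \<and> lab_seq S s = lab_seq S s'"
      by (intro exI[of _ q0'] exI[of _ s'] exI[of _ q']) simp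
  qed
qed

end
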